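(* Let $G$ be a finite simple graph with threshold assignment $\tau$. Let $H$ be a triangle-free $\tau$-resistant subgraph of $G$ and let $uv$ be an edge with $u,v\in V(H)$. Define $\tau'$ by $\tau'(w)=\tau(w)$ for $w\notin V(H)$, $\tau'(w)=0$ for $w\in V(H)\setminus\{u,v\}$, $\tau'(v)=deg_G(v)$ and $\tau'(u)=deg_G(u)$. Then $\overline{\tau'}\le\overline{\tau}$.
   Context: A threshold assignment is a function $\tau:V(G)\to\{0,1,2,\dots\}$ with average $\overline{\tau}=\sum_v\tau(v)/|V(G)|$. An induced subgraph $K$ of $G$ is $\tau$-resistant if $deg_K(v)\ge deg_G(v)-\tau(v)+1$ for every vertex $v\in K$. *)

theory Defs
  imports Complex_Main
begin

definition simple_graph :: "'a set \<Rightarrow> ('a \<Rightarrow> 'a \<Rightarrow> bool) \<Rightarrow> bool" where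
  "simple_graph V E \<longleftrightarrow> finite V \<and> (\<forall>x y. E x y \<longrightarrow> x \<in> V \<and> y \<in> V)
     \<and> (\<forall>x y. E x y \<longrightarrow> E y x) \<and> (\<forall>x. \<not> E x x)"

definition deg :: "'a set \<Rightarrow> ('a \<Rightarrow> 'a \<Rightarrow> bool) \<Rightarrow> 'a \<Rightarrow> nat" where
  "deg S E v = card {w \<in> S. E v w}"

definition avg_thr :: "'a set \<Rightarrow> ('a \<Rightarrow> nat) \<Rightarrow> real" where
  "avg_thr V \<tau> = (\<Sum>v\<in>V. real (\<tau> v)) / real (card V)"

definition resistant :: "'a set \<Rightarrow> ('a \<Rightarrow> 'a \<Rightarrow> bool) \<Rightarrow> ('a \<Rightarrow> nat) \<Rightarrow> 'a set \<Rightarrow> bool" where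
  "resistant V E \<tau> S \<longleftrightarrow> S \<subseteq> V \<and>
     (\<forall>v\<in>S. int (deg S E v) \<ge> int (deg V E v) - int (\<tau> v) + 1)"

definition triangle_free :: "'a set \<Rightarrow> ('a \<Rightarrow> 'a \<Rightarrow> bool) \<Rightarrow> bool" where
  "triangle_free S E \<longleftrightarrow> \<not> (\<exists>x\<in>S. \<exists>y\<in>S. \<exists>z\<in>S. E x y \<and> E y z \<and> E x z)"

end

theory Submission
  imports Defs
begin

theorem lemma2:
  fixes V H :: "'a set" and E :: "'a \<Rightarrow> 'a \<Rightarrow> bool" and \<tau> :: "'a \<Rightarrow> nat" and u v :: 'a
  assumes "simple_graph V E"
    and "resistant V E \<tau> H"
    and "triangle_free H E"
    and "u \<in> H" and "v \<in> H" and "E u v"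
  shows "avg_thr V (\<lambda>w. if w \<notin> H then \<tau> w else if w = v then deg V E v
                         else if w = u then deg V E u else 0) \<le> avg_thr V \<tau>"
proof -
  define t where "t = (\<lambda>w. if w \<notin> H then \<tau> w else if w = v then deg V E v
                         else if w = u then deg V E u else 0)"
  have fV: "finite V" and HV: "H \<subseteq> V" using assms(1,2) by (auto simp: simple_graph_def resistant_def)
  have fH: "finite H" using fV HV finite_subset by blast
  have uv: "u \<noteq> v" using assms(1,6) by (auto simp: simple_graph_def)
  have res: "\<And>w. w \<in> H \<Longrightarrow> int (deg H E w) \<ge> int (deg V E w) - int (\<tau> w) + 1"
    using assms(2) by (auto simp: resistant_def)
  have dle: "\<And>w. deg H E w \<le> deg V E w"
    unfolding deg_def using HV fV by (intro card_mono) auto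
  have pos: "\<And>w. w \<in> H \<Longrightarrow> \<tau> w \<ge> 1" 
  proof -
    fix w assume "w \<in> H"
    from res[OF this] dle[of w] show "\<tau> w \<ge> 1" by linarith
  qed
  have disj: "{w\<in>H. E u w} \<inter> {w\<in>H. E v w} = {}"
    using assms(3,4,5,6) assms(1) unfolding triangle_free_def simple_graph_def by blast
  have "card ({w\<in>H. E u w} \<union> {w\<in>H. E v w}) \<le> card H"
    using fH by (intro card_mono) auto
  then have cardH: "deg H E u + deg H E v \<le> card H"
    unfolding deg_def using disj fH by (simp add: card_Un_disjoint)
  have s1: "(\<Sum>w\<in>H. t w) = deg V E u + deg V E v"
  proof -
    have "(\<Sum>w\<in>H. t w) = t u + t v + (\<Sum>w\<in>H-{u,v}. t w)"
      using fH assms(4,5) uv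
    proof -
      have "H = insert u (insert v (H-{u,v}))" using assms(4,5) by auto
      moreover have "finite (H-{u,v})" using fH by simp
      ultimately show ?thesis using uv by (metis (no_types, lifting) Diff_iff insert_iff add.assoc sum.insert finite_insert)
    qed
    also have "(\<Sum>w\<in>H-{u,v}. t w) = 0" by (auto simp: t_def)
    finally show ?thesis using uv assms(4,5) by (simp add: t_def)
  qed
  have s2: "(\<Sum>w\<in>H. \<tau> w) = \<tau> u + \<tau> v + (\<Sum>w\<in>H-{u,v}. \<tau> w)"
      using fH assms(4,5) uv
    proof -
      have "H = insert u (insert v (H-{u,v}))" using assms(4,5) by auto
      moreover have "finite (H-{u,v})" using fH by simp
      ultimately show ?thesis using uv by (metis (no_types, lifting) Diff_iff insert_iff add.assoc sum.insert finite_insert)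
    qed
  have "card (H-{u,v}) * 1 \<le> (\<Sum>w\<in>H-{u,v}. \<tau> w)"
    using sum_bounded_below[of "H-{u,v}" 1 \<tau>] pos by auto
  moreover have "card (H-{u,v}) = card H - 2" using fH assms(4,5) uv by simp
  moreover have "card H \<ge> 2"
  proof -
    have "card {u,v} \<le> card H" using fH assms(4,5) by (intro card_mono) auto
    thus ?thesis using uv by simp
  qed
  ultimately have "int (\<Sum>w\<in>H-{u,v}. \<tau> w) \<ge> int (card H) - 2" by linarith
  then have "(\<Sum>w\<in>H. t w) \<le> (\<Sum>w\<in>H. \<tau> w)"
    using s1 s2 res[OF assms(4)] res[OF assms(5)] cardH by linarith
  moreover have "(\<Sum>w\<in>V-H. t w) = (\<Sum>w\<in>V-H. \<tau> w)" by (auto simp: t_def)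
  ultimately have "(\<Sum>w\<in>V. t w) \<le> (\<Sum>w\<in>V. \<tau> w)"
    using sum.subset_diff[OF HV fV, of t] sum.subset_diff[OF HV fV, of \<tau>] by linarith
  then have "(\<Sum>w\<in>V. real (t w)) \<le> (\<Sum>w\<in>V. real (\<tau> w))"
    by (metis of_nat_le_iff of_nat_sum)
  then show ?thesis unfolding avg_thr_def t_def[symmetric]
    by (simp add: divide_right_mono)
qed

end
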